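(* Let $b$ be a positive integer, $n$ a positive integer coprime with $b$, and $k\in\mathbb N$. Then the Frobenius homomorphism $F_b:\mathbb Z[1/b][q]/(\Phi_n(q)^k)\to\mathbb Z[1/b][q]/(\Phi_n(q)^k)$ defined by $F_b(q)=q^b$ is a (well-defined) isomorphism of algebras.
   Context: $\Phi_n(q)$ denotes the $n$th cyclotomic polynomial. *)

theory Defs
  imports Complex_Main "HOL-Computational_Algebra.Polynomial"
begin

definition prim_roots :: "nat \<Rightarrow> complex set" where
  "prim_roots n = {z. z ^ n = 1 \<and> (\<forall>m\<in>{1..<n}. z ^ m \<noteq> 1)}"

definition cyclotomic_complex :: "nat \<Rightarrow> complex poly" where
  "cyclotomic_complex n = (\<Prod>z\<in>prim_roots n. [:- z, 1:])"

text \<open>The n-th cyclotomic polynomial Phi_n(q) as a polynomial with rational coefficients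
  (its coefficients are in fact integers).\<close>
definition cyclotomic :: "nat \<Rightarrow> rat poly" where
  "cyclotomic n = (THE p. map_poly of_rat p = cyclotomic_complex n)"

definition Zinv :: "nat \<Rightarrow> rat set" where
  "Zinv b = {r. \<exists>(a::int) (m::nat). r = of_int a / of_nat b ^ m}"

definition Zinv_poly :: "nat \<Rightarrow> rat poly set" where
  "Zinv_poly b = {p. \<forall>i. coeff p i \<in> Zinv b}"

text \<open>Congruence modulo the ideal (Phi_n(q)^k) of Z[1/b][q]; the quotient ring
  Z[1/b][q]/(Phi_n(q)^k) is Zinv_poly b modulo this relation.\<close>
definition cong_cyc :: "nat \<Rightarrow> nat \<Rightarrow> nat \<Rightarrow> rat poly \<Rightarrow> rat poly \<Rightarrow> bool" where
  "cong_cyc b n k p p' \<longleftrightarrow> (\<exists>h\<in>Zinv_poly b. p - p' = cyclotomic n ^ k * h)"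

definition frob :: "nat \<Rightarrow> rat poly \<Rightarrow> rat poly" where
  "frob b p = pcompose p (monom 1 b)"

end

theory Submission
  imports Defs
begin



section \<open>Z[1/b]\<close>

lemma Zinv_of_int: "of_int a \<in> Zinv b"
  unfolding Zinv_def by (rule CollectI, rule exI[of _ a], rule exI[of _ 0]) simp

lemma Zinv_0: "0 \<in> Zinv b" using Zinv_of_int[of 0] by simp
lemma Zinv_1: "1 \<in> Zinv b" using Zinv_of_int[of 1] by simp
lemma Zinv_Ints: "x \<in> \<int> \<Longrightarrow> x \<in> Zinv b" by (auto elim: Ints_cases simp: Zinv_of_int)
lemma Zinv_of_nat: "of_nat m \<in> Zinv b" using Zinv_of_int[of "int m"] by simp

lemma Zinv_inv: "1 / of_nat b \<in> Zinv b"
  unfolding Zinv_def by (rule CollectI, rule exI[of _ 1], rule exI[of _ 1]) simp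

lemma Zinv_add:
  assumes "b > 0" "x \<in> Zinv b" "y \<in> Zinv b" shows "x + y \<in> Zinv b"
proof -
  obtain a m where x: "x = of_int a / of_nat b ^ m" using assms(2) unfolding Zinv_def by auto
  obtain a' m' where y: "y = of_int a' / of_nat b ^ m'" using assms(3) unfolding Zinv_def by auto
  have "x + y = of_int (a * int b ^ m' + a' * int b ^ m) / of_nat b ^ (m + m')"
    using assms(1) by (simp add: x y field_simps power_add)
  thus ?thesis unfolding Zinv_def by blast
qed

lemma Zinv_mult:
  assumes "x \<in> Zinv b" "y \<in> Zinv b" shows "x * y \<in> Zinv b"
proof -
  obtain a m where x: "x = of_int a / of_nat b ^ m" using assms(1) unfolding Zinv_def by auto
  obtain a' m' where y: "y = of_int a' / of_nat b ^ m'" using assms(2) unfolding Zinv_def by auto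
  have "x * y = of_int (a * a') / of_nat b ^ (m + m')"
    by (simp add: x y power_add)
  thus ?thesis unfolding Zinv_def by blast
qed

lemma Zinv_uminus:
  assumes "x \<in> Zinv b" shows "- x \<in> Zinv b"
proof -
  obtain a m where x: "x = of_int a / of_nat b ^ m" using assms(1) unfolding Zinv_def by auto
  have "-x = of_int (-a) / of_nat b ^ m" by (simp add: x)
  thus ?thesis unfolding Zinv_def by blast
qed

lemma Zinv_diff:
  assumes "b > 0" "x \<in> Zinv b" "y \<in> Zinv b" shows "x - y \<in> Zinv b"
  using Zinv_add[OF assms(1,2) Zinv_uminus[OF assms(3)]] by simp

section \<open>Subrings and monic division\<close>

definition subr :: "'a::comm_ring_1 set \<Rightarrow> bool" where
  "subr S \<longleftrightarrow> 0 \<in> S \<and> 1 \<in> S \<and> (\<forall>x\<in>S. \<forall>y\<in>S. x + y \<in> S \<and> x * y \<in> S) \<and> (\<forall>x\<in>S. -x \<in> S)"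

lemma subr_Zinv: "b > 0 \<Longrightarrow> subr (Zinv b)"
  unfolding subr_def using Zinv_0 Zinv_1 Zinv_add Zinv_mult Zinv_uminus by blast

lemma subr_Ints: "subr (\<int> :: 'a::comm_ring_1 set)"
  unfolding subr_def by auto

lemma subr_sum: "subr S \<Longrightarrow> (\<And>i. i \<in> A \<Longrightarrow> f i \<in> S) \<Longrightarrow> sum f A \<in> S"
  by (induction A rule: infinite_finite_induct) (auto simp: subr_def)

definition PS :: "'a::comm_ring_1 set \<Rightarrow> 'a poly set" where
  "PS S = {p. \<forall>i. coeff p i \<in> S}"

lemma PS_add: "subr S \<Longrightarrow> p \<in> PS S \<Longrightarrow> q \<in> PS S \<Longrightarrow> p + q \<in> PS S"
  by (auto simp: PS_def subr_def)
lemma PS_uminus: "subr S \<Longrightarrow> p \<in> PS S \<Longrightarrow> - p \<in> PS S"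
  by (auto simp: PS_def subr_def)
lemma PS_diff: "subr S \<Longrightarrow> p \<in> PS S \<Longrightarrow> q \<in> PS S \<Longrightarrow> p - q \<in> PS S"
  using PS_add[of S p "-q"] PS_uminus[of S q] by simp
lemma PS_mult: "subr S \<Longrightarrow> p \<in> PS S \<Longrightarrow> q \<in> PS S \<Longrightarrow> p * q \<in> PS S"
  unfolding PS_def by (auto simp: coeff_mult intro!: subr_sum) (auto simp: subr_def)
lemma PS_0: "subr S \<Longrightarrow> 0 \<in> PS S" by (auto simp: PS_def subr_def)
lemma PS_const: "subr S \<Longrightarrow> c \<in> S \<Longrightarrow> [:c:] \<in> PS S" by (auto simp: PS_def subr_def coeff_pCons split: nat.splits)
lemma PS_1: "subr S \<Longrightarrow> 1 \<in> PS S" using PS_const[of S 1] by (simp add: subr_def one_pCons)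
lemma PS_monom: "subr S \<Longrightarrow> c \<in> S \<Longrightarrow> monom c m \<in> PS S" by (auto simp: PS_def subr_def coeff_monom)
lemma PS_smult: "subr S \<Longrightarrow> c \<in> S \<Longrightarrow> p \<in> PS S \<Longrightarrow> smult c p \<in> PS S" by (auto simp: PS_def subr_def)
lemma PS_power: "subr S \<Longrightarrow> p \<in> PS S \<Longrightarrow> p ^ m \<in> PS S"
  by (induction m) (auto simp: PS_1 PS_mult)
lemma PS_sum: "subr S \<Longrightarrow> (\<And>i. i \<in> A \<Longrightarrow> f i \<in> PS S) \<Longrightarrow> sum f A \<in> PS S"
  by (induction A rule: infinite_finite_induct) (auto simp: PS_0 PS_add)
lemma PS_prod: "subr S \<Longrightarrow> (\<And>i. i \<in> A \<Longrightarrow> f i \<in> PS S) \<Longrightarrow> prod f A \<in> PS S"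
  by (induction A rule: infinite_finite_induct) (auto simp: PS_1 PS_mult)
lemma PS_pcompose: "subr S \<Longrightarrow> p \<in> PS S \<Longrightarrow> q \<in> PS S \<Longrightarrow> pcompose p q \<in> PS S"
proof (induction p)
  case 0 show ?case using PS_0[OF 0(1)] by (simp only: pcompose_0)
next
  case (pCons a p)
  have all: "\<forall>i. coeff (pCons a p) i \<in> S" using pCons.prems(2) unfolding PS_def by blast
  have a: "a \<in> S" using spec[OF all, of 0] by simp
  have p: "p \<in> PS S" unfolding PS_def
  proof (rule CollectI, rule allI)
    fix i show "coeff p i \<in> S" using spec[OF all, of "Suc i"] by simp
  qed
  show ?case unfolding pcompose_pCons
    using pCons a p by (intro PS_add PS_mult PS_const) auto
qed

lemma monic_div_PS:
  fixes g h :: "'a::idom poly"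
  assumes S: "subr S" and g: "lead_coeff g = 1" "g \<in> PS S" and gh: "g * h \<in> PS S"
  shows "h \<in> PS S"
  using gh
proof (induction h rule: measure_induct_rule[where f=degree])
  case (less h)
  show ?case
  proof (cases "h = 0")
    case True thus ?thesis using PS_0[OF S] by simp
  next
    case False
    define d where "d = degree h"
    define c where "c = lead_coeff h"
    have "coeff (g * h) (degree g + degree h) = c" using g(1) coeff_mult_degree_sum[of g h] by (simp add: c_def)
    moreover have "coeff (g * h) (degree g + degree h) \<in> S" using less.prems by (simp add: PS_def)
    ultimately have c: "c \<in> S" by simp
    define h' where "h' = h - monom c d"
    have mc: "monom c d \<in> PS S" by (rule PS_monom[OF S c])
    have "g * h' = g * h - g * monom c d" by (simp add: h'_def algebra_simps)
    hence gh': "g * h' \<in> PS S" using PS_diff[OF S less.prems PS_mult[OF S g(2) mc]] by simp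
    have h': "h' \<in> PS S"
    proof (cases "h' = 0")
      case True thus ?thesis using PS_0[OF S] by simp
    next
      case False
      have le: "degree h' \<le> d" unfolding h'_def d_def
        by (rule degree_diff_le) (auto simp: degree_monom_le)
      have "coeff h' d = 0" by (simp add: h'_def c_def d_def)
      hence "degree h' \<noteq> d" using False by (metis leading_coeff_0_iff)
      hence "degree h' < degree h" using le d_def by simp
      thus ?thesis using less.IH[of h'] gh' by blast
    qed
    have "h = h' + monom c d" unfolding h'_def by (simp only: diff_add_cancel)
    thus ?thesis using PS_add[OF S h' mc] by (simp only:)
  qed
qed

lemma Zinv_poly_PS: "Zinv_poly b = PS (Zinv b)"
  by (simp add: Zinv_poly_def PS_def)




abbreviation cp :: "rat poly \<Rightarrow> complex poly" where "cp \<equiv> map_poly of_rat"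

lemma coeff_cp: "coeff (cp p) i = of_rat (coeff p i)"
  by (simp add: coeff_map_poly)

lemma cp_add: "cp (p + q) = cp p + cp q"
  by (rule poly_eqI) (simp add: coeff_cp of_rat_add)
lemma cp_uminus: "cp (- p) = - cp p"
  by (rule poly_eqI) (simp add: coeff_cp of_rat_minus)
lemma cp_diff: "cp (p - q) = cp p - cp q"
  by (rule poly_eqI) (simp add: coeff_cp of_rat_diff)
lemma cp_smult: "cp (smult c p) = smult (of_rat c) (cp p)"
  by (rule poly_eqI) (simp add: coeff_cp of_rat_mult)
lemma cp_pCons: "cp (pCons a p) = pCons (of_rat a) (cp p)"
  by (simp add: map_poly_pCons)
lemma cp_const: "cp [:a:] = [:of_rat a:]"
  by (simp add: map_poly_pCons)
lemma cp_1: "cp 1 = 1" by simp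
lemma cp_monom: "cp (monom c m) = monom (of_rat c) m"
  by (simp add: map_poly_monom)
lemma cp_mult: "cp (p * q) = cp p * cp q"
  by (induction p) (simp_all add: cp_add cp_smult cp_pCons)
lemma cp_power: "cp (p ^ m) = cp p ^ m"
  by (induction m) (simp_all add: cp_mult)
lemma cp_prod: "cp (prod f A) = (\<Prod>x\<in>A. cp (f x))"
  by (induction A rule: infinite_finite_induct) (simp_all add: cp_mult)
lemma cp_pcompose: "cp (pcompose p q) = pcompose (cp p) (cp q)"
  by (induction p) (simp_all add: pcompose_pCons cp_add cp_mult cp_pCons cp_const)
lemma cp_inj: "cp p = cp q \<Longrightarrow> p = q"
  by (rule poly_eqI) (metis coeff_cp of_rat_eq_iff)
lemma cp_eq_0: "cp p = 0 \<longleftrightarrow> p = 0"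
  using cp_inj[of p 0] by auto
lemma degree_cp: "degree (cp p) = degree p"
  by (rule degree_map_poly) simp
lemma lead_coeff_cp: "lead_coeff (cp p) = of_rat (lead_coeff p)"
  by (simp add: degree_cp coeff_cp)

lemma cp_dvd:
  assumes "cp p dvd cp q" shows "p dvd q"
proof (cases "p = 0")
  case True
  then have "cp q = 0" using assms by simp
  then show ?thesis using True cp_eq_0 by auto
next
  case False
  define r where "r = q mod p"
  have qr: "q = p * (q div p) + r" by (simp add: r_def)
  have "cp q = cp p * cp (q div p) + cp r" by (subst qr) (simp add: cp_add cp_mult)
  hence "cp p dvd cp r" using assms by (metis dvd_add_right_iff dvd_triv_left)
  moreover have "degree r < degree p \<or> r = 0" unfolding r_def using False
    using degree_mod_less[of p q] by auto
  ultimately have "r = 0"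
  proof (cases "r = 0")
    case False
    hence "cp r \<noteq> 0" by (simp add: cp_eq_0)
    hence "degree (cp p) \<le> degree (cp r)" using dvd_imp_degree_le \<open>cp p dvd cp r\<close> by blast
    thus ?thesis using \<open>degree r < degree p \<or> r = 0\<close> by (simp add: degree_cp)
  qed
  thus ?thesis using qr by (metis add.right_neutral dvd_triv_left)
qed




lemma prim_pow1: "z \<in> prim_roots d \<Longrightarrow> z ^ d = 1"
  by (simp add: prim_roots_def)

lemma prim_pow_iff:
  assumes "d > 0" "z \<in> prim_roots d"
  shows "z ^ j = 1 \<longleftrightarrow> d dvd j"
proof
  assume "d dvd j"
  then obtain m where "j = d * m" by auto
  thus "z ^ j = 1" using prim_pow1[OF assms(2)] by (simp add: power_mult)
next
  assume j: "z ^ j = 1"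
  have "z ^ j = z ^ (d * (j div d) + j mod d)" by simp
  also have "\<dots> = (z ^ d) ^ (j div d) * z ^ (j mod d)" by (simp only: power_add power_mult)
  finally have "z ^ j = (z ^ d) ^ (j div d) * z ^ (j mod d)" .
  hence "z ^ (j mod d) = 1" using j prim_pow1[OF assms(2)] by simp
  moreover have "j mod d < d" using assms(1) by simp
  ultimately have "j mod d = 0"
  proof (cases "j mod d = 0")
    case False
    hence "j mod d \<in> {1..<d}" using \<open>j mod d < d\<close> by simp
    hence "z ^ (j mod d) \<noteq> 1" using assms(2) unfolding prim_roots_def by blast
    thus ?thesis using \<open>z ^ (j mod d) = 1\<close> by simp
  qed
  thus "d dvd j" by auto
qed

lemma prim_nonzero: "d > 0 \<Longrightarrow> z \<in> prim_roots d \<Longrightarrow> z \<noteq> 0"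
  using prim_pow1[of z d] by (cases d) auto

lemma prim_finite: "d > 0 \<Longrightarrow> finite (prim_roots d)"
  by (rule finite_subset[OF _ finite_roots_unity[of d]]) (auto simp: prim_roots_def)

lemma prim_pow_coprime:
  assumes "d > 0" "z \<in> prim_roots d" "coprime j d"
  shows "z ^ j \<in> prim_roots d"
  unfolding prim_roots_def
proof (intro CollectI conjI ballI)
  show "(z ^ j) ^ d = 1" using prim_pow1[OF assms(2)] by (metis power_mult mult.commute power_one)
  fix m assume m: "m \<in> {1..<d}"
  show "(z ^ j) ^ m \<noteq> 1"
  proof
    assume "(z ^ j) ^ m = 1"
    hence "z ^ (j * m) = 1" by (simp only: power_mult)
    hence "d dvd j * m" using prim_pow_iff[OF assms(1,2)] by blast
    hence "d dvd m" using assms(3) by (metis coprime_commute coprime_dvd_mult_right_iff)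
    thus False using m by (auto dest: dvd_imp_le)
  qed
qed

lemma prim_disj:
  assumes "d > 0" "d' > 0" "z \<in> prim_roots d" "z \<in> prim_roots d'"
  shows "d = d'"
proof -
  have "d dvd d'" using prim_pow_iff[OF assms(1,3)] prim_pow1[OF assms(4)] by simp
  moreover have "d' dvd d" using prim_pow_iff[OF assms(2,4)] prim_pow1[OF assms(3)] by simp
  ultimately show ?thesis by (simp add: dvd_antisym)
qed

lemma roots_decomp:
  assumes "n > 0"
  shows "{z::complex. z ^ n = 1} = (\<Union>d\<in>{d. d dvd n}. prim_roots d)"
proof (intro equalityI subsetI)
  fix z :: complex assume "z \<in> {z. z ^ n = 1}"
  hence zn: "z ^ n = 1" by simp
  define d where "d = (LEAST d. 0 < d \<and> z ^ d = 1)"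
  have P: "0 < d \<and> z ^ d = 1" unfolding d_def by (rule LeastI[of _ n]) (use assms zn in auto)
  have "z \<in> prim_roots d" unfolding prim_roots_def
  proof (intro CollectI conjI ballI)
    show "z ^ d = 1" using P by simp
    fix m assume "m \<in> {1..<d}"
    thus "z ^ m \<noteq> 1" using not_less_Least[of m "\<lambda>d. 0 < d \<and> z ^ d = 1"] unfolding d_def[symmetric] by auto
  qed
  moreover have "d dvd n" using prim_pow_iff[OF _ \<open>z \<in> prim_roots d\<close>] P zn by blast
  ultimately show "z \<in> (\<Union>d\<in>{d. d dvd n}. prim_roots d)" by blast
next
  fix z assume "z \<in> (\<Union>d\<in>{d. d dvd n}. prim_roots d)"
  then obtain d where "d dvd n" "z \<in> prim_roots d" by blast
  moreover have "d > 0" using \<open>d dvd n\<close> assms by (auto intro!: Nat.gr0I)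
  ultimately show "z \<in> {z. z ^ n = 1}" using prim_pow_iff by blast
qed

lemma prod_lin_dvd:
  fixes P :: "'a::idom poly"
  assumes "finite S" "\<forall>z\<in>S. [:-z,1:] ^ k dvd P"
  shows "(\<Prod>z\<in>S. [:-z,1:] ^ k) dvd P"
  using assms
proof (induction S arbitrary: P rule: finite_induct)
  case empty thus ?case by simp
next
  case (insert z S)
  show ?case
  proof (cases "P = 0")
    case True thus ?thesis by simp
  next
    case False
    obtain Q where Q: "P = [:-z,1:] ^ k * Q" using insert.prems by auto
    have Q0: "Q \<noteq> 0" using False Q by auto
    have "\<forall>w\<in>S. [:-w,1:] ^ k dvd Q"
    proof
      fix w assume w: "w \<in> S"
      hence wz: "w \<noteq> z" using insert.hyps by auto
      have "k \<le> order w P" using insert.prems w False order_divides by blast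
      also have "order w P = order w ([:-z,1:] ^ k) + order w Q"
        using Q False by (simp add: order_mult)
      also have "order w ([:-z,1:] ^ k) = 0"
        by (rule order_0I) (use wz in simp)
      finally show "[:-w,1:] ^ k dvd Q" using order_divides by auto
    qed
    hence "(\<Prod>z\<in>S. [:-z,1:] ^ k) dvd Q" using insert.IH by blast
    hence "[:-z,1:] ^ k * (\<Prod>z\<in>S. [:-z,1:] ^ k) dvd P" unfolding Q by (rule mult_dvd_mono[OF dvd_refl])
    thus ?thesis using insert.hyps by simp
  qed
qed

lemma monic_dvd_eq:
  fixes A B :: "'a::idom poly"
  assumes "lead_coeff A = 1" "lead_coeff B = 1" "degree A = degree B" "A dvd B"
  shows "A = B"
proof -
  obtain C where C: "B = A * C" using assms(4) by auto
  have "B \<noteq> 0" "A \<noteq> 0" using assms(1,2) by auto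
  hence "C \<noteq> 0" using C by auto
  hence "degree C = 0" using C assms(3) \<open>A \<noteq> 0\<close> by (simp add: degree_mult_eq)
  moreover have "lead_coeff C = 1" using C assms(1,2) by (simp add: lead_coeff_mult)
  ultimately have "C = 1" by (metis degree_0_id one_pCons)
  thus ?thesis using C by simp
qed

lemma lead_coeff_xn1: "n > 0 \<Longrightarrow> lead_coeff (monom 1 n - 1 :: 'a::comm_ring_1 poly) = 1"
  and degree_xn1: "n > 0 \<Longrightarrow> degree (monom 1 n - 1 :: 'a::comm_ring_1 poly) = n"
proof -
  assume n: "n > 0"
  have c: "coeff (monom 1 n - 1 :: 'a poly) n = 1" using n by simp
  have "degree (monom 1 n - 1 :: 'a poly) \<le> n"
    by (rule degree_diff_le) (auto simp: degree_monom_le)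
  moreover have "n \<le> degree (monom 1 n - 1 :: 'a poly)" using c by (intro le_degree) simp
  ultimately show d: "degree (monom 1 n - 1 :: 'a poly) = n" by simp
  show "lead_coeff (monom 1 n - 1 :: 'a poly) = 1" using c d by simp
qed

lemma lin_prod_monic: "lead_coeff (\<Prod>z\<in>S. [:-z,1:] :: 'a::idom poly) = 1"
  by (simp add: lead_coeff_prod)

lemma lin_prod_degree: "finite S \<Longrightarrow> degree (\<Prod>z\<in>S. [:-z,1:] :: 'a::idom poly) = card S"
  by (subst degree_prod_sum_eq) auto

lemma xn1_prod:
  assumes "n > 0"
  shows "(monom 1 n - 1 :: complex poly) = (\<Prod>z\<in>{z. z ^ n = 1}. [:-z,1:])"
proof -
  have fin: "finite {z::complex. z ^ n = 1}" using finite_roots_unity[of n] assms by simp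
  have "(\<Prod>z\<in>{z. z ^ n = 1}. [:-z,1:] ^ 1) dvd (monom 1 n - 1 :: complex poly)"
    by (rule prod_lin_dvd[OF fin]) (auto simp: poly_eq_0_iff_dvd[symmetric] poly_monom)
  have "(\<Prod>z\<in>{z. z ^ n = 1}. [:-z,1:]) = (monom 1 n - 1 :: complex poly)"
  proof (rule monic_dvd_eq[OF lin_prod_monic lead_coeff_xn1[OF assms]])
    show "degree (\<Prod>z\<in>{z::complex. z ^ n = 1}. [:-z,1:]) = degree (monom 1 n - 1 :: complex poly)"
      using lin_prod_degree[OF fin] degree_xn1[OF assms, where 'a=complex] card_roots_unity_eq[OF assms] by simp
  qed (use \<open>(\<Prod>z\<in>{z. z ^ n = 1}. [:-z,1:] ^ 1) dvd _\<close> in simp)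
  thus ?thesis by simp
qed

lemma cc_monic: "lead_coeff (cyclotomic_complex d) = 1"
  by (simp add: cyclotomic_complex_def lin_prod_monic)

lemma xn1_cyc:
  assumes "n > 0"
  shows "(monom 1 n - 1 :: complex poly) = (\<Prod>d\<in>{d. d dvd n}. cyclotomic_complex d)"
proof -
  have pos: "d \<in> {d. d dvd n} \<Longrightarrow> d > 0" for d using assms by (auto intro!: Nat.gr0I)
  have "(monom 1 n - 1 :: complex poly) = (\<Prod>z\<in>(\<Union>d\<in>{d. d dvd n}. prim_roots d). [:-z,1:])"
    using xn1_prod[OF assms] roots_decomp[OF assms] by simp
  also have "\<dots> = (\<Prod>d\<in>{d. d dvd n}. \<Prod>z\<in>prim_roots d. [:-z,1:])"
  proof (rule prod.UNION_disjoint)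
    show "finite {d. d dvd n}" using assms by simp
    show "\<forall>d\<in>{d. d dvd n}. finite (prim_roots d)" using pos prim_finite by blast
    show "\<forall>d\<in>{d. d dvd n}. \<forall>d'\<in>{d. d dvd n}. d \<noteq> d' \<longrightarrow> prim_roots d \<inter> prim_roots d' = {}"
      using pos prim_disj by blast
  qed
  finally show ?thesis by (simp add: cyclotomic_complex_def)
qed




lemma cyc_exists:
  "n > 0 \<Longrightarrow> \<exists>p. p \<in> PS \<int> \<and> cp p = cyclotomic_complex n"
proof (induction n rule: less_induct)
  case (less n)
  define D where "D = {d. d dvd n \<and> d < n}"
  have Dpos: "d \<in> D \<Longrightarrow> 0 < d \<and> d < n" for d
    using less.prems by (auto simp: D_def intro!: Nat.gr0I)
  define P where "P d = (SOME p. p \<in> PS \<int> \<and> cp p = cyclotomic_complex d)" for d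
  have Pd: "P d \<in> PS \<int> \<and> cp (P d) = cyclotomic_complex d" if "d \<in> D" for d
    unfolding P_def by (rule someI_ex) (use less.IH Dpos[OF that] in blast)
  define Q where "Q = (\<Prod>d\<in>D. P d)"
  have cpQ: "cp Q = (\<Prod>d\<in>D. cyclotomic_complex d)"
    unfolding Q_def cp_prod by (rule prod.cong) (use Pd in auto)
  have QZ: "Q \<in> PS \<int>" unfolding Q_def by (rule PS_prod[OF subr_Ints]) (use Pd in blast)
  have finD: "finite D" using less.prems by (simp add: D_def)
  have dec: "{d. d dvd n} = insert n D" "n \<notin> D" using less.prems by (auto simp: D_def dest: dvd_imp_le)
  have xn: "(monom 1 n - 1 :: complex poly) = cyclotomic_complex n * cp Q"
    using xn1_cyc[OF less.prems] unfolding dec(1) cpQ using prod.insert[OF finD dec(2)] by simp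
  have cpx: "cp (monom 1 n - 1) = monom 1 n - 1" by (simp add: cp_diff cp_monom)
  have "cp Q dvd cp (monom 1 n - 1)" unfolding cpx xn by simp
  hence "Q dvd monom 1 n - 1" by (rule cp_dvd)
  then obtain R where R: "monom 1 n - 1 = Q * R" by auto
  have lcQ: "lead_coeff (cp Q) = 1" unfolding cpQ by (simp add: lead_coeff_prod cc_monic)
  hence lQ: "lead_coeff Q = 1" by (simp add: lead_coeff_cp)
  have "cp Q * cp R = cp Q * cyclotomic_complex n"
    using xn cpx R by (simp add: cp_mult mult.commute)
  moreover have "cp Q \<noteq> 0" using lcQ by auto
  ultimately have cR: "cp R = cyclotomic_complex n" by simp
  have "Q * R \<in> PS \<int>" unfolding R[symmetric]
    by (intro PS_diff PS_monom PS_1 subr_Ints) auto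
  hence "R \<in> PS \<int>" by (rule monic_div_PS[OF subr_Ints lQ QZ])
  thus ?case using cR by blast
qed

lemma cyc_props:
  assumes "n > 0"
  shows "cp (cyclotomic n) = cyclotomic_complex n" "cyclotomic n \<in> PS \<int>" "lead_coeff (cyclotomic n) = 1"
proof -
  obtain p where p: "p \<in> PS \<int>" "cp p = cyclotomic_complex n" using cyc_exists[OF assms] by blast
  have "cyclotomic n = p" unfolding cyclotomic_def
    by (rule the_equality) (use p cp_inj in auto)
  thus c: "cp (cyclotomic n) = cyclotomic_complex n" "cyclotomic n \<in> PS \<int>" using p by auto
  have "of_rat (lead_coeff (cyclotomic n)) = (1::complex)" using c(1) cc_monic[of n] by (simp add: lead_coeff_cp[symmetric])
  thus "lead_coeff (cyclotomic n) = 1" by simp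
qed




lemma inv_exp:
  fixes b n :: nat
  assumes "b > 0" "coprime n b"
  obtains c t where "b * c = 1 + n * t" "coprime c n"
proof -
  obtain c t where ct: "b * c = n * t + gcd b n" using bezout_nat[of b n] assms(1) by auto
  have g: "gcd b n = 1" using assms(2) by (simp add: coprime_iff_gcd_eq_1 gcd.commute)
  have e: "b * c = 1 + n * t" using ct g by simp
  have "coprime c n"
  proof (rule coprimeI)
    fix d assume "d dvd c" "d dvd n"
    hence "d dvd b * c" "d dvd n * t" by auto
    hence "d dvd b * c - n * t" by (rule dvd_diff_nat)
    thus "is_unit d" using e by simp
  qed
  thus ?thesis using that e by blast
qed

lemma prim_pow_surj:
  assumes "b > 0" "n > 0" "coprime n b" "w \<in> prim_roots n"
  shows "\<exists>z\<in>prim_roots n. z ^ b = w"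
proof -
  obtain c t where ct: "b * c = 1 + n * t" "coprime c n" using inv_exp[OF assms(1,3)] by blast
  have z: "w ^ c \<in> prim_roots n" by (rule prim_pow_coprime[OF assms(2,4) ct(2)])
  have "(w ^ c) ^ b = w ^ (b * c)" by (simp only: power_mult[symmetric] mult.commute)
  also have "\<dots> = w * (w ^ n) ^ t" by (simp only: ct(1) power_add power_mult power_one_right)
  also have "\<dots> = w" using prim_pow1[OF assms(4)] by simp
  finally show ?thesis using z by blast
qed

lemma pcompose_power: "pcompose (p ^ m) q = (pcompose p q) ^ m"
  by (induction m) (simp_all add: pcompose_mult pcompose_1)

lemma order_comp:
  fixes P :: "complex poly"
  assumes "P \<noteq> 0" "z \<noteq> 0" "b > 0"
  shows "order z (pcompose P (monom 1 b)) = order (z ^ b) P"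
proof -
  define w where "w = z ^ b"
  define m where "m = order w P"
  obtain R where R: "P = [:-w,1:] ^ m * R" "\<not> [:-w,1:] dvd R"
    using order_decomp[OF assms(1), of w] unfolding m_def by blast
  have Rw: "poly R w \<noteq> 0" using R(2) poly_eq_0_iff_dvd by blast
  define L where "L = (monom 1 b - [:w:] :: complex poly)"
  have Lc: "pcompose [:-w,1:] (monom 1 b) = L"
    by (simp add: L_def pcompose_pCons)
  have "poly L z = 0" by (simp add: L_def w_def poly_monom)
  then obtain T where T: "L = [:-z,1:] * T" using poly_eq_0_iff_dvd by blast
  have pl: "pderiv [:-z,1:] = 1" by (simp add: pderiv_pCons)
  have "pderiv L = [:-z,1:] * pderiv T + T * pderiv [:-z,1:]" by (simp only: T pderiv_mult)
  hence "pderiv L = [:-z,1:] * pderiv T + T" by (simp only: pl mult_1_right)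
  hence e1: "poly (pderiv L) z = poly T z" by simp
  have "pderiv L = monom (of_nat b) (b - 1)" by (simp add: L_def pderiv_diff pderiv_monom pderiv_pCons)
  hence "poly (pderiv L) z = of_nat b * z ^ (b - 1)" by (simp add: poly_monom)
  hence "poly T z = of_nat b * z ^ (b - 1)" using e1 by simp
  hence Tz: "poly T z \<noteq> 0" using assms by simp
  define R' where "R' = pcompose R (monom 1 b)"
  have R'z: "poly R' z \<noteq> 0" using Rw by (simp add: R'_def poly_pcompose poly_monom w_def)
  have eq: "pcompose P (monom 1 b) = [:-z,1:] ^ m * (T ^ m * R')"
  proof -
    have "pcompose P (monom 1 b) = (pcompose [:-w,1:] (monom 1 b)) ^ m * R'"
      by (simp only: R(1) pcompose_mult pcompose_power R'_def)
    also have "\<dots> = ([:-z,1:] * T) ^ m * R'" by (simp only: Lc T)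
    also have "\<dots> = [:-z,1:] ^ m * (T ^ m * R')" by (simp only: power_mult_distrib mult.assoc)
    finally show ?thesis .
  qed
  have nz: "poly (T ^ m * R') z \<noteq> 0" using Tz R'z by simp
  hence nz': "T ^ m * R' \<noteq> 0" by auto
  have "order z (pcompose P (monom 1 b)) = order z ([:-z,1:] ^ m) + order z (T ^ m * R')"
    unfolding eq by (rule order_mult) (use nz' in simp)
  also have "\<dots> = m" using nz by (simp add: order_power_n_n order_0I)
  finally show ?thesis by (simp add: m_def w_def)
qed




lemma cc_root: "n > 0 \<Longrightarrow> z \<in> prim_roots n \<Longrightarrow> poly (cyclotomic_complex n) z = 0"
  unfolding cyclotomic_complex_def poly_prod using prim_finite[of n]
  by (subst prod_zero_iff) auto

lemma cc_power: "cyclotomic_complex n ^ k = (\<Prod>z\<in>prim_roots n. [:-z,1:] ^ k)"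
  by (simp add: cyclotomic_complex_def prod_power_distrib)

lemma cp_dvd_mono: "p dvd q \<Longrightarrow> cp p dvd cp q"
  by (auto simp: cp_mult)

lemma cp_frob: "cp (frob b p) = pcompose (cp p) (monom 1 b)"
  by (simp add: frob_def cp_pcompose cp_monom)

lemma Phi_dvd_xn1:
  assumes "n > 0" shows "cyclotomic n dvd monom 1 n - 1"
proof (rule cp_dvd)
  have "(\<Prod>z\<in>prim_roots n. [:-z,1:] ^ 1) dvd cp (monom 1 n - 1)"
  proof (rule prod_lin_dvd[OF prim_finite[OF assms]], intro ballI)
    fix z assume z: "z \<in> prim_roots n"
    have "poly (cp (monom 1 n - 1)) z = 0" using prim_pow1[OF z] by (simp add: cp_diff cp_monom poly_monom)
    thus "[:-z,1:] ^ 1 dvd cp (monom 1 n - 1)" using poly_eq_0_iff_dvd by auto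
  qed
  thus "cp (cyclotomic n) dvd cp (monom 1 n - 1)" using cyc_props(1)[OF assms] by (simp add: cyclotomic_complex_def)
qed

lemma Phi_dvd_frob:
  assumes "b > 0" "n > 0" "coprime n b" shows "cyclotomic n dvd frob b (cyclotomic n)"
proof (rule cp_dvd)
  have "(\<Prod>z\<in>prim_roots n. [:-z,1:] ^ 1) dvd cp (frob b (cyclotomic n))"
  proof (rule prod_lin_dvd[OF prim_finite[OF assms(2)]], intro ballI)
    fix z assume z: "z \<in> prim_roots n"
    have "z ^ b \<in> prim_roots n" using prim_pow_coprime[OF assms(2) z] assms(3) by (simp add: coprime_commute)
    hence "poly (cp (frob b (cyclotomic n))) z = 0"
      using cc_root[OF assms(2)] by (simp add: cp_frob poly_pcompose poly_monom cyc_props(1)[OF assms(2)])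
    thus "[:-z,1:] ^ 1 dvd cp (frob b (cyclotomic n))" using poly_eq_0_iff_dvd by auto
  qed
  thus "cp (cyclotomic n) dvd cp (frob b (cyclotomic n))" using cyc_props(1)[OF assms(2)] by (simp add: cyclotomic_complex_def)
qed

lemma frob_dvd_reflect:
  assumes "b > 0" "n > 0" "coprime n b" and dv: "cyclotomic n ^ k dvd frob b F"
  shows "cyclotomic n ^ k dvd F"
proof (cases "F = 0")
  case True thus ?thesis by simp
next
  case False
  define G where "G = pcompose (cp F) (monom 1 b)"
  have cF: "cp F \<noteq> 0" using False cp_eq_0 by auto
  have G0: "G \<noteq> 0" unfolding G_def
  proof
    assume "pcompose (cp F) (monom 1 b) = 0"
    hence "cp F = 0" by (rule pcompose_eq_0) (use assms(1) in \<open>simp add: degree_monom_eq\<close>)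
    thus False using cF by simp
  qed
  have ccG: "cyclotomic_complex n ^ k dvd G"
    using cp_dvd_mono[OF dv] by (simp add: cp_power cyc_props(1)[OF assms(2)] cp_frob G_def)
  have "(\<Prod>w\<in>prim_roots n. [:-w,1:] ^ k) dvd cp F"
  proof (rule prod_lin_dvd[OF prim_finite[OF assms(2)]], intro ballI)
    fix w assume w: "w \<in> prim_roots n"
    obtain z where z: "z \<in> prim_roots n" "z ^ b = w" using prim_pow_surj[OF assms(1,2,3) w] by blast
    have "[:-z,1:] ^ k dvd cyclotomic_complex n ^ k"
      unfolding cc_power by (rule dvd_prodI[OF prim_finite[OF assms(2)] z(1)])
    hence "[:-z,1:] ^ k dvd G" using ccG dvd_trans by blast
    hence "k \<le> order z G" using G0 order_divides by blast
    also have "order z G = order w (cp F)" unfolding G_def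
      using order_comp[OF cF prim_nonzero[OF assms(2) z(1)] assms(1)] z(2) by simp
    finally show "[:-w,1:] ^ k dvd cp F" using order_divides by blast
  qed
  hence "cp (cyclotomic n ^ k) dvd cp F" by (simp add: cp_power cyc_props(1)[OF assms(2)] cc_power)
  thus ?thesis by (rule cp_dvd)
qed

lemma PS_mono: "S \<subseteq> S' \<Longrightarrow> PS S \<subseteq> PS S'"
  by (auto simp: PS_def)

lemma Phi_Zinv: "n > 0 \<Longrightarrow> cyclotomic n \<in> Zinv_poly b"
  using cyc_props(2)[of n] PS_mono[of \<int> "Zinv b"] Zinv_Ints by (auto simp: Zinv_poly_PS)

lemma Phi_div_Zinv:
  assumes "b > 0" "n > 0" "cyclotomic n ^ k dvd B" "B \<in> Zinv_poly b"
  shows "\<exists>h\<in>Zinv_poly b. B = cyclotomic n ^ k * h"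
proof -
  obtain h where h: "B = cyclotomic n ^ k * h" using assms(3) by auto
  have "h \<in> PS (Zinv b)"
  proof (rule monic_div_PS[OF subr_Zinv[OF assms(1)]])
    show "lead_coeff (cyclotomic n ^ k) = 1" by (simp add: lead_coeff_power cyc_props(3)[OF assms(2)])
    show "cyclotomic n ^ k \<in> PS (Zinv b)"
      using PS_power[OF subr_Zinv[OF assms(1)]] Phi_Zinv[OF assms(2)] by (auto simp: Zinv_poly_PS)
    show "cyclotomic n ^ k * h \<in> PS (Zinv b)" using assms(4) h by (simp add: Zinv_poly_PS)
  qed
  thus ?thesis using h by (auto simp: Zinv_poly_PS)
qed




lemma U_add: "b > 0 \<Longrightarrow> p \<in> Zinv_poly b \<Longrightarrow> q \<in> Zinv_poly b \<Longrightarrow> p + q \<in> Zinv_poly b"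
  using PS_add[OF subr_Zinv] by (simp add: Zinv_poly_PS)
lemma U_diff: "b > 0 \<Longrightarrow> p \<in> Zinv_poly b \<Longrightarrow> q \<in> Zinv_poly b \<Longrightarrow> p - q \<in> Zinv_poly b"
  using PS_diff[OF subr_Zinv] by (simp add: Zinv_poly_PS)
lemma U_uminus: "b > 0 \<Longrightarrow> p \<in> Zinv_poly b \<Longrightarrow> - p \<in> Zinv_poly b"
  using PS_uminus[OF subr_Zinv] by (simp add: Zinv_poly_PS)
lemma U_mult: "b > 0 \<Longrightarrow> p \<in> Zinv_poly b \<Longrightarrow> q \<in> Zinv_poly b \<Longrightarrow> p * q \<in> Zinv_poly b"
  using PS_mult[OF subr_Zinv] by (simp add: Zinv_poly_PS)
lemma U_power: "b > 0 \<Longrightarrow> p \<in> Zinv_poly b \<Longrightarrow> p ^ m \<in> Zinv_poly b"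
  using PS_power[OF subr_Zinv] by (simp add: Zinv_poly_PS)
lemma U_0: "b > 0 \<Longrightarrow> 0 \<in> Zinv_poly b"
  using PS_0[OF subr_Zinv] by (simp add: Zinv_poly_PS)
lemma U_1: "b > 0 \<Longrightarrow> 1 \<in> Zinv_poly b"
  using PS_1[OF subr_Zinv] by (simp add: Zinv_poly_PS)
lemma U_const: "b > 0 \<Longrightarrow> c \<in> Zinv b \<Longrightarrow> [:c:] \<in> Zinv_poly b"
  using PS_const[OF subr_Zinv] by (simp add: Zinv_poly_PS)
lemma U_monom: "b > 0 \<Longrightarrow> monom 1 m \<in> Zinv_poly b"
  using PS_monom[OF subr_Zinv Zinv_1] by (simp add: Zinv_poly_PS)
lemma U_smult: "b > 0 \<Longrightarrow> c \<in> Zinv b \<Longrightarrow> p \<in> Zinv_poly b \<Longrightarrow> smult c p \<in> Zinv_poly b"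
  using PS_smult[OF subr_Zinv] by (simp add: Zinv_poly_PS)
lemma U_sum: "b > 0 \<Longrightarrow> (\<And>i. i \<in> A \<Longrightarrow> f i \<in> Zinv_poly b) \<Longrightarrow> sum f A \<in> Zinv_poly b"
  unfolding Zinv_poly_PS by (rule PS_sum[OF subr_Zinv])
lemma U_frob: "b > 0 \<Longrightarrow> p \<in> Zinv_poly b \<Longrightarrow> frob b p \<in> Zinv_poly b"
  unfolding frob_def using PS_pcompose[OF subr_Zinv _ U_monom[unfolded Zinv_poly_PS]]
  by (simp add: Zinv_poly_PS)

lemma frob_add: "frob b (p + q) = frob b p + frob b q" by (simp add: frob_def pcompose_add)
lemma frob_diff: "frob b (p - q) = frob b p - frob b q" by (simp add: frob_def pcompose_diff)
lemma frob_mult: "frob b (p * q) = frob b p * frob b q" by (simp add: frob_def pcompose_mult)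
lemma frob_power: "frob b (p ^ m) = frob b p ^ m" by (simp add: frob_def pcompose_power)
lemma frob_1: "frob b 1 = 1" by (simp add: frob_def pcompose_1)
lemma frob_const: "frob b [:c:] = [:c:]" by (simp add: frob_def)
lemma frob_smult: "frob b (smult c p) = smult c (frob b p)" by (simp add: frob_def pcompose_smult)
lemma frob_monom: "frob b (monom 1 m) = monom 1 (b * m)"
proof -
  have "frob b (monom 1 m) = pcompose [:0,1:] (monom 1 b) ^ m"
    by (simp add: frob_def monom_altdef pcompose_power)
  also have "pcompose [:0,1:] (monom 1 b) = (monom 1 b :: rat poly)" by (simp add: pcompose_pCons)
  finally show ?thesis by (simp add: monom_power)
qed

lemma cong_I: "h \<in> Zinv_poly b \<Longrightarrow> p - p' = cyclotomic n ^ k * h \<Longrightarrow> cong_cyc b n k p p'"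
  unfolding cong_cyc_def by blast
lemma cong_refl: "b > 0 \<Longrightarrow> cong_cyc b n k p p"
  using cong_I[OF U_0] by simp
lemma cong_sym: "b > 0 \<Longrightarrow> cong_cyc b n k p p' \<Longrightarrow> cong_cyc b n k p' p"
  unfolding cong_cyc_def by (metis U_uminus minus_diff_eq mult_minus_right)
lemma cong_trans: "b > 0 \<Longrightarrow> cong_cyc b n k p p' \<Longrightarrow> cong_cyc b n k p' p'' \<Longrightarrow> cong_cyc b n k p p''"
proof -
  assume b: "b > 0" and "cong_cyc b n k p p'" "cong_cyc b n k p' p''"
  then obtain h1 h2 where h: "h1 \<in> Zinv_poly b" "p - p' = cyclotomic n ^ k * h1"
    "h2 \<in> Zinv_poly b" "p' - p'' = cyclotomic n ^ k * h2" unfolding cong_cyc_def by blast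
  have "p - p'' = cyclotomic n ^ k * (h1 + h2)" using h(2,4) by (simp add: algebra_simps)
  thus ?thesis using U_add[OF b h(1,3)] by (rule cong_I[rotated])
qed
lemma cong_add: "b > 0 \<Longrightarrow> cong_cyc b n k p p' \<Longrightarrow> cong_cyc b n k q q' \<Longrightarrow> cong_cyc b n k (p + q) (p' + q')"
proof -
  assume b: "b > 0" and "cong_cyc b n k p p'" "cong_cyc b n k q q'"
  then obtain h1 h2 where h: "h1 \<in> Zinv_poly b" "p - p' = cyclotomic n ^ k * h1"
    "h2 \<in> Zinv_poly b" "q - q' = cyclotomic n ^ k * h2" unfolding cong_cyc_def by blast
  have "(p + q) - (p' + q') = cyclotomic n ^ k * (h1 + h2)" using h(2,4) by (simp add: algebra_simps)
  thus ?thesis using U_add[OF b h(1,3)] by (rule cong_I[rotated])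
qed
lemma cong_mult:
  assumes b: "b > 0" and U: "p \<in> Zinv_poly b" "q' \<in> Zinv_poly b"
    and c: "cong_cyc b n k p p'" "cong_cyc b n k q q'"
  shows "cong_cyc b n k (p * q) (p' * q')"
proof -
  obtain h1 h2 where h: "h1 \<in> Zinv_poly b" "p - p' = cyclotomic n ^ k * h1"
    "h2 \<in> Zinv_poly b" "q - q' = cyclotomic n ^ k * h2" using c unfolding cong_cyc_def by blast
  have "p * q - p' * q' = p * (q - q') + (p - p') * q'" by (simp add: algebra_simps)
  also have "\<dots> = cyclotomic n ^ k * (p * h2 + h1 * q')" using h(2,4) by (simp add: algebra_simps)
  finally show ?thesis using U_add[OF b U_mult[OF b U(1) h(3)] U_mult[OF b h(1) U(2)]] by (rule cong_I[rotated])
qed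
lemma cong_smult: "b > 0 \<Longrightarrow> c \<in> Zinv b \<Longrightarrow> cong_cyc b n k p p' \<Longrightarrow> cong_cyc b n k (smult c p) (smult c p')"
proof -
  assume b: "b > 0" and c: "c \<in> Zinv b" and "cong_cyc b n k p p'"
  then obtain h where h: "h \<in> Zinv_poly b" "p - p' = cyclotomic n ^ k * h" unfolding cong_cyc_def by blast
  have "smult c p - smult c p' = cyclotomic n ^ k * smult c h" using h(2)
    by (metis mult_smult_right smult_diff_right)
  thus ?thesis using U_smult[OF b c h(1)] by (rule cong_I[rotated])
qed
lemma cong_power:
  assumes b: "b > 0" and U: "p \<in> Zinv_poly b" "p' \<in> Zinv_poly b" and c: "cong_cyc b n k p p'"
  shows "cong_cyc b n k (p ^ m) (p' ^ m)"
proof (induction m)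
  case 0 thus ?case using cong_refl[OF b] by simp
next
  case (Suc m)
  show ?case using cong_mult[OF b U(1) U_power[OF b U(2)] c Suc] by simp
qed

lemma part_wd:
  assumes b: "b > 0" and n: "n > 0" and cp: "coprime n b"
    and U: "p \<in> Zinv_poly b" "p' \<in> Zinv_poly b" and c: "cong_cyc b n k p p'"
  shows "cong_cyc b n k (frob b p) (frob b p')"
proof -
  obtain h where h: "h \<in> Zinv_poly b" "p - p' = cyclotomic n ^ k * h" using c unfolding cong_cyc_def by blast
  obtain w where w: "w \<in> Zinv_poly b" "frob b (cyclotomic n) = cyclotomic n ^ 1 * w"
    using Phi_div_Zinv[OF b n _ U_frob[OF b Phi_Zinv[OF n]], of 1] Phi_dvd_frob[OF b n cp] by auto
  have "frob b p - frob b p' = frob b (p - p')" by (simp add: frob_diff)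
  also have "\<dots> = frob b (cyclotomic n) ^ k * frob b h" by (simp add: h(2) frob_mult frob_power)
  also have "\<dots> = cyclotomic n ^ k * (w ^ k * frob b h)" by (simp add: w(2) power_mult_distrib)
  finally show ?thesis using U_mult[OF b U_power[OF b w(1)] U_frob[OF b h(1)]] by (rule cong_I[rotated])
qed

lemma part_refl:
  assumes b: "b > 0" and n: "n > 0" and cp: "coprime n b"
    and U: "p \<in> Zinv_poly b" "p' \<in> Zinv_poly b" and c: "cong_cyc b n k (frob b p) (frob b p')"
  shows "cong_cyc b n k p p'"
proof -
  obtain h where h: "h \<in> Zinv_poly b" "frob b p - frob b p' = cyclotomic n ^ k * h" using c unfolding cong_cyc_def by blast
  have "cyclotomic n ^ k dvd frob b (p - p')" using h(2) by (simp add: frob_diff)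
  hence "cyclotomic n ^ k dvd p - p'" by (rule frob_dvd_reflect[OF b n cp])
  from Phi_div_Zinv[OF b n this U_diff[OF b U]] show ?thesis unfolding cong_cyc_def .
qed




definition inA :: "nat \<Rightarrow> nat \<Rightarrow> nat \<Rightarrow> rat poly \<Rightarrow> bool" where
  "inA b n k y \<longleftrightarrow> y \<in> Zinv_poly b \<and> (\<exists>r\<in>Zinv_poly b. cong_cyc b n k (frob b r) y)"

context
  fixes b n k :: nat
  assumes b: "b > 0" and n: "n > 0" and cpr: "coprime n b"
begin

lemma inA_U: "inA b n k y \<Longrightarrow> y \<in> Zinv_poly b" by (simp add: inA_def)

lemma inA_cong: "inA b n k y \<Longrightarrow> y' \<in> Zinv_poly b \<Longrightarrow> cong_cyc b n k y y' \<Longrightarrow> inA b n k y'"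
  unfolding inA_def using cong_trans[OF b] by blast

lemma inA_frob: "r \<in> Zinv_poly b \<Longrightarrow> inA b n k (frob b r)"
  unfolding inA_def using U_frob[OF b] cong_refl[OF b] by blast

lemma inA_const: "c \<in> Zinv b \<Longrightarrow> inA b n k [:c:]"
  using inA_frob[OF U_const[OF b]] by (simp add: frob_const)

lemma inA_add: "inA b n k y \<Longrightarrow> inA b n k y' \<Longrightarrow> inA b n k (y + y')"
proof -
  assume "inA b n k y" "inA b n k y'"
  then obtain r r' where r: "r \<in> Zinv_poly b" "cong_cyc b n k (frob b r) y" "y \<in> Zinv_poly b"
    "r' \<in> Zinv_poly b" "cong_cyc b n k (frob b r') y'" "y' \<in> Zinv_poly b" unfolding inA_def by blast
  have "cong_cyc b n k (frob b (r + r')) (y + y')" unfolding frob_add by (rule cong_add[OF b r(2) r(5)])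
  thus ?thesis unfolding inA_def using U_add[OF b r(1,4)] U_add[OF b r(3,6)] by blast
qed

lemma inA_mult: "inA b n k y \<Longrightarrow> inA b n k y' \<Longrightarrow> inA b n k (y * y')"
proof -
  assume "inA b n k y" "inA b n k y'"
  then obtain r r' where r: "r \<in> Zinv_poly b" "cong_cyc b n k (frob b r) y" "y \<in> Zinv_poly b"
    "r' \<in> Zinv_poly b" "cong_cyc b n k (frob b r') y'" "y' \<in> Zinv_poly b" unfolding inA_def by blast
  have "cong_cyc b n k (frob b (r * r')) (y * y')" unfolding frob_mult
    by (rule cong_mult[OF b U_frob[OF b r(1)] r(6) r(2) r(5)])
  thus ?thesis unfolding inA_def using U_mult[OF b r(1,4)] U_mult[OF b r(3,6)] by blast
qed

lemma inA_smult: "c \<in> Zinv b \<Longrightarrow> inA b n k y \<Longrightarrow> inA b n k (smult c y)"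
  using inA_mult[OF inA_const] by simp

lemma inA_uminus: "inA b n k y \<Longrightarrow> inA b n k (- y)"
  using inA_smult[OF Zinv_uminus[OF Zinv_1]] by simp

lemma inA_diff: "inA b n k y \<Longrightarrow> inA b n k y' \<Longrightarrow> inA b n k (y - y')"
  using inA_add[OF _ inA_uminus] by simp

lemma inA_1: "inA b n k 1"
  using inA_const[OF Zinv_1] by (simp add: one_pCons)

lemma inA_power: "inA b n k y \<Longrightarrow> inA b n k (y ^ m)"
  by (induction m) (simp_all add: inA_1 inA_mult)

lemma inA_0: "inA b n k 0"
  using inA_const[OF Zinv_0] by simp

lemma inA_sum: "(\<And>i. i \<in> A \<Longrightarrow> inA b n k (f i)) \<Longrightarrow> inA b n k (sum f A)"
  by (induction A rule: infinite_finite_induct) (auto simp: inA_add inA_0)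

lemma inA_ideal: "h \<in> Zinv_poly b \<Longrightarrow> inA b n k (cyclotomic n ^ k * h)"
proof -
  assume h: "h \<in> Zinv_poly b"
  have "cong_cyc b n k (frob b 0) (cyclotomic n ^ k * h)"
    by (rule cong_I[OF U_uminus[OF b h]]) (simp add: frob_def)
  thus ?thesis unfolding inA_def using U_0[OF b] U_mult[OF b U_power[OF b Phi_Zinv[OF n]] h] by blast
qed

lemma z_frob: "frob b (monom 1 n) = monom 1 n ^ b"
  by (simp add: frob_monom monom_power mult.commute)

lemma e_fact: "\<exists>\<psi>\<in>Zinv_poly b. monom 1 n - 1 = cyclotomic n * \<psi>"
  using Phi_div_Zinv[OF b n _ U_diff[OF b U_monom[OF b] U_1[OF b]], of 1] Phi_dvd_xn1[OF n] by auto

lemma D1_pow: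
  assumes "y \<in> Zinv_poly b" "u \<in> Zinv_poly b" "y - 1 = e * u"
  shows "\<exists>v\<in>Zinv_poly b. y ^ m - 1 = e * v"
proof -
  have "y ^ m - 1 = (y - 1) * (\<Sum>i<m. y ^ i)" by (rule power_diff_1_eq)
  also have "\<dots> = e * (u * (\<Sum>i<m. y ^ i))" by (simp add: assms(3) mult.assoc)
  finally have eqn: "y ^ m - 1 = e * (u * (\<Sum>i<m. y ^ i))" .
  have s: "(\<Sum>i<m. y ^ i) \<in> Zinv_poly b" by (rule U_sum[OF b]) (rule U_power[OF b assms(1)])
  show ?thesis using eqn U_mult[OF b assms(2) s] by blast
qed

lemma D1_mult:
  assumes "y2 \<in> Zinv_poly b" "u1 \<in> Zinv_poly b" "u2 \<in> Zinv_poly b"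
    "y1 - 1 = e * u1" "y2 - 1 = e * u2"
  shows "\<exists>v\<in>Zinv_poly b. y1 * y2 - 1 = e * v"
proof -
  have "y1 * y2 - 1 = (y1 - 1) * y2 + (y2 - 1)" by (simp add: algebra_simps)
  also have "\<dots> = e * (u1 * y2 + u2)" by (simp add: assms(4,5) algebra_simps)
  finally show ?thesis using U_add[OF b U_mult[OF b assms(2,1)] assms(3)] by blast
qed

lemma newton_step:
  assumes A: "inA b n k \<alpha>" and u: "u \<in> Zinv_poly b"
    and eq: "monom 1 n - \<alpha> = (monom 1 n - 1) ^ Suc j * u"
  shows "\<exists>\<alpha>' u'. inA b n k \<alpha>' \<and> u' \<in> Zinv_poly b \<and> monom 1 n - \<alpha>' = (monom 1 n - 1) ^ Suc (Suc j) * u'"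
proof -
  define z :: "rat poly" where "z = monom 1 n"
  define e where "e = z - 1"
  have zU: "z \<in> Zinv_poly b" unfolding z_def by (rule U_monom[OF b])
  have aU: "\<alpha> \<in> Zinv_poly b" using A by (rule inA_U)
  have eq': "z - \<alpha> = e ^ Suc j * u" using eq by (simp add: z_def e_def)
  have ua: "1 - e ^ j * u \<in> Zinv_poly b"
    using U_diff[OF b U_1[OF b] U_mult[OF b U_power[OF b U_diff[OF b zU U_1[OF b]]] u]] by (simp add: e_def)
  have a1: "\<alpha> - 1 = e * (1 - e ^ j * u)"
  proof -
    have "\<alpha> - 1 = (z - 1) - (z - \<alpha>)" by simp
    also have "\<dots> = e * (1 - e ^ j * u)" by (simp add: eq' e_def algebra_simps)
    finally show ?thesis .
  qed
  have z1: "z - 1 = e * 1" by (simp add: e_def)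
  have terms: "\<forall>i. \<exists>v\<in>Zinv_poly b. \<alpha> ^ (b - Suc i) * z ^ i - 1 = e * v"
  proof
    fix i
    obtain v1 where v1: "v1 \<in> Zinv_poly b" "\<alpha> ^ (b - Suc i) - 1 = e * v1"
      using D1_pow[OF aU ua a1] by blast
    obtain v2 where v2: "v2 \<in> Zinv_poly b" "z ^ i - 1 = e * v2"
      using D1_pow[OF zU U_1[OF b] z1] by blast
    show "\<exists>v\<in>Zinv_poly b. \<alpha> ^ (b - Suc i) * z ^ i - 1 = e * v"
      using D1_mult[OF U_power[OF b zU] v1(1) v2(1) v1(2) v2(2)] .
  qed
  then obtain V where V: "\<And>i. V i \<in> Zinv_poly b" "\<And>i. \<alpha> ^ (b - Suc i) * z ^ i - 1 = e * V i"
    by metis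
  define S where "S = (\<Sum>i<b. \<alpha> ^ (b - Suc i) * z ^ i)"
  define VV where "VV = (\<Sum>i<b. V i)"
  have VVU: "VV \<in> Zinv_poly b" unfolding VV_def by (rule U_sum[OF b V(1)])
  have "S - of_nat b = (\<Sum>i<b. \<alpha> ^ (b - Suc i) * z ^ i - 1)"
    by (simp add: S_def sum_subtractf)
  also have "\<dots> = e * VV" by (simp add: V(2) VV_def sum_distrib_left)
  finally have SV: "S = e * VV + of_nat b" by (simp add: algebra_simps)
  have zb: "z ^ b - \<alpha> ^ b = (z - \<alpha>) * S" unfolding S_def by (rule power_diff_sumr2)
  define \<alpha>' where "\<alpha>' = \<alpha> + smult (1 / of_nat b) (z ^ b - \<alpha> ^ b)"
  have zbA: "inA b n k (z ^ b)" using inA_frob[OF zU] z_frob by (simp add: z_def)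
  have A': "inA b n k \<alpha>'" unfolding \<alpha>'_def
    by (rule inA_add[OF A inA_smult[OF Zinv_inv inA_diff[OF zbA inA_power[OF A]]]])
  have sb: "smult (1 / of_nat b) (of_nat b :: rat poly) = 1" using b by (simp add: of_nat_poly)
  have "z - \<alpha>' = (z - \<alpha>) - smult (1 / of_nat b) ((z - \<alpha>) * S)" by (simp add: \<alpha>'_def zb)
  also have "\<dots> = (z - \<alpha>) * (1 - smult (1 / of_nat b) S)" by (simp add: algebra_simps)
  also have "1 - smult (1 / of_nat b) S = - smult (1 / of_nat b) (e * VV)"
    by (simp add: SV smult_add_right sb)
  also have "(z - \<alpha>) * (- smult (1 / of_nat b) (e * VV)) = e ^ Suc (Suc j) * (- smult (1 / of_nat b) (u * VV))"
    by (simp add: eq' algebra_simps)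
  finally have "z - \<alpha>' = e ^ Suc (Suc j) * (- smult (1 / of_nat b) (u * VV))" .
  moreover have "- smult (1 / of_nat b) (u * VV) \<in> Zinv_poly b"
    by (intro U_uminus[OF b] U_smult[OF b Zinv_inv] U_mult[OF b u VVU])
  ultimately show ?thesis using A' unfolding z_def e_def by blast
qed

lemma newton_iter: "\<exists>\<alpha> u. inA b n k \<alpha> \<and> u \<in> Zinv_poly b \<and> monom 1 n - \<alpha> = (monom 1 n - 1) ^ Suc j * u"
proof (induction j)
  case 0
  show ?case using inA_1 U_1[OF b] by (intro exI[of _ 1]) auto
next
  case (Suc j)
  thus ?case using newton_step by blast
qed

lemma inA_z: "inA b n k (monom 1 n)"
proof -
  obtain \<alpha> u where au: "inA b n k \<alpha>" "u \<in> Zinv_poly b" "monom 1 n - \<alpha> = (monom 1 n - 1) ^ Suc k * u"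
    using newton_iter by blast
  obtain \<psi> where \<psi>: "\<psi> \<in> Zinv_poly b" "monom 1 n - 1 = cyclotomic n * \<psi>" using e_fact by blast
  have "\<alpha> - monom 1 n = cyclotomic n ^ k * (- (\<psi> ^ k * (monom 1 n - 1) * u))"
  proof -
    have "\<alpha> - monom 1 n = - ((monom 1 n - 1) ^ k * (monom 1 n - 1) * u)" using au(3) by (simp add: algebra_simps)
    also have "\<dots> = cyclotomic n ^ k * (- (\<psi> ^ k * (monom 1 n - 1) * u))"
      by (subst (1) \<psi>(2)) (simp add: power_mult_distrib algebra_simps)
    finally show ?thesis .
  qed
  hence "cong_cyc b n k \<alpha> (monom 1 n)"
    by (rule cong_I[rotated]) (intro U_uminus[OF b] U_mult[OF b] U_power[OF b] \<psi>(1) au(2) U_diff[OF b] U_monom[OF b] U_1[OF b])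
  thus ?thesis using inA_cong[OF au(1) U_monom[OF b]] by blast
qed

lemma inA_q: "inA b n k (monom 1 1)"
proof -
  obtain c t where ct: "b * c = 1 + n * t" "coprime c n" using inv_exp[OF b cpr] by blast
  obtain \<psi> where \<psi>: "\<psi> \<in> Zinv_poly b" "monom 1 n - 1 = cyclotomic n * \<psi>" using e_fact by blast
  define z :: "rat poly" where "z = monom 1 n"
  define w where "w = (\<Sum>i<k. (1 - z) ^ i)"
  have zU: "z \<in> Zinv_poly b" unfolding z_def by (rule U_monom[OF b])
  have zA: "inA b n k z" unfolding z_def by (rule inA_z)
  have wA: "inA b n k w" unfolding w_def by (intro inA_sum inA_power inA_diff inA_1 zA)
  have wU: "w \<in> Zinv_poly b" by (rule inA_U[OF wA])
  have zw: "z * w = 1 - (1 - z) ^ k"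
    using one_diff_power_eq[of "1 - z" k] by (simp add: w_def)
  have m1: "1 - z = cyclotomic n * (- \<psi>)" using \<psi>(2) by (simp add: z_def algebra_simps)
  have m2: "(1 - z) ^ k = cyclotomic n ^ k * (- \<psi>) ^ k" by (simp only: m1 power_mult_distrib)
  have "z * w - 1 = cyclotomic n ^ k * (- ((- \<psi>) ^ k))" unfolding zw m2 by simp
  hence c1: "cong_cyc b n k (z * w) 1"
    by (rule cong_I[rotated]) (intro U_uminus[OF b] U_power[OF b] \<psi>(1))
  have zwU: "z * w \<in> Zinv_poly b" by (rule U_mult[OF b zU wU])
  have c15: "cong_cyc b n k ((z * w) ^ t) (1 ^ t)" by (rule cong_power[OF b zwU U_1[OF b] c1])
  have c2: "cong_cyc b n k (monom 1 1 * (z * w) ^ t) (monom 1 1 * 1)"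
    using cong_mult[OF b U_monom[OF b] U_power[OF b U_1[OF b]] cong_refl[OF b] c15] by simp
  have "monom 1 1 * (z * w) ^ t = frob b (monom 1 c) * w ^ t"
  proof -
    have "frob b (monom 1 c) = monom 1 1 * z ^ t"
      by (simp add: frob_monom ct(1) z_def monom_power mult_monom)
    thus ?thesis by (simp add: power_mult_distrib mult.assoc)
  qed
  hence c3: "cong_cyc b n k (frob b (monom 1 c) * w ^ t) (monom 1 1)" using c2 by simp
  have "inA b n k (frob b (monom 1 c) * w ^ t)"
    by (rule inA_mult[OF inA_frob[OF U_monom[OF b]] inA_power[OF wA]])
  thus ?thesis using inA_cong[OF _ U_monom[OF b] c3] by blast
qed

lemma inA_all: "p \<in> Zinv_poly b \<Longrightarrow> inA b n k p"
proof (induction p)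
  case 0 show ?case by (rule inA_0)
next
  case (pCons a p)
  have all: "\<forall>i. coeff (pCons a p) i \<in> Zinv b" using pCons.prems unfolding Zinv_poly_def by blast
  have a: "a \<in> Zinv b" using spec[OF all, of 0] by simp
  have p: "p \<in> Zinv_poly b" unfolding Zinv_poly_def
  proof (rule CollectI, rule allI)
    fix i show "coeff p i \<in> Zinv b" using spec[OF all, of "Suc i"] by simp
  qed
  have eq: "pCons a p = [:a:] + monom 1 1 * p"
    by (simp add: monom_Suc monom_0)
  show ?case unfolding eq by (rule inA_add[OF inA_const[OF a] inA_mult[OF inA_q pCons.IH[OF p]]])
qed

lemma part_surj: "p \<in> Zinv_poly b \<Longrightarrow> \<exists>r\<in>Zinv_poly b. cong_cyc b n k (frob b r) p"
  using inA_all by (simp add: inA_def)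

end

theorem proposition12:
  fixes b n k :: nat
  assumes "b > 0" and "n > 0" and "coprime n b"
  shows "(\<forall>p\<in>Zinv_poly b. frob b p \<in> Zinv_poly b)
    \<and> (\<forall>p\<in>Zinv_poly b. \<forall>p'\<in>Zinv_poly b.
          cong_cyc b n k p p' \<longrightarrow> cong_cyc b n k (frob b p) (frob b p'))
    \<and> (\<forall>p\<in>Zinv_poly b. \<forall>p'\<in>Zinv_poly b.
          frob b (p + p') = frob b p + frob b p' \<and> frob b (p * p') = frob b p * frob b p')
    \<and> frob b 1 = 1
    \<and> (\<forall>c\<in>Zinv b. \<forall>p\<in>Zinv_poly b. frob b (smult c p) = smult c (frob b p))
    \<and> (\<forall>p\<in>Zinv_poly b. \<forall>p'\<in>Zinv_poly b.
          cong_cyc b n k (frob b p) (frob b p') \<longrightarrow> cong_cyc b n k p p')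
    \<and> (\<forall>p\<in>Zinv_poly b. \<exists>r\<in>Zinv_poly b. cong_cyc b n k (frob b r) p)"
proof (intro conjI ballI impI)
  fix p assume "p \<in> Zinv_poly b" thus "frob b p \<in> Zinv_poly b" by (rule U_frob[OF assms(1)])
next
  fix p p' assume "p \<in> Zinv_poly b" "p' \<in> Zinv_poly b" "cong_cyc b n k p p'"
  thus "cong_cyc b n k (frob b p) (frob b p')" by (rule part_wd[OF assms])
next
  fix p p' show "frob b (p + p') = frob b p + frob b p'" by (rule frob_add)
next
  fix p p' show "frob b (p * p') = frob b p * frob b p'" by (rule frob_mult)
next
  show "frob b 1 = 1" by (rule frob_1)
next
  fix c p show "frob b (smult c p) = smult c (frob b p)" by (rule frob_smult)
next
  fix p p' assume "p \<in> Zinv_poly b" "p' \<in> Zinv_poly b" "cong_cyc b n k (frob b p) (frob b p')"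
  thus "cong_cyc b n k p p'" by (rule part_refl[OF assms])
next
  fix p assume "p \<in> Zinv_poly b" thus "\<exists>r\<in>Zinv_poly b. cong_cyc b n k (frob b r) p" by (rule part_surj[OF assms])
qed



end
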